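(* Let $\mathsf{T}$ be a rooted plane tree and $\delta\in\mathcal{O}(\mathsf{T})$. Adjoin an imaginary node $\omega$ as the parent of the root, and set $\delta(\omega)=\mathsf{Pop}(\delta)(\omega)=\mathsf{T}\cup\{\omega\}$. Then for any two nodes $u,v\in\mathsf{T}\cup\{\omega\}$, the sets $\delta(u)$ and $\mathsf{Pop}(\delta)(v)$ are either nested (one contains the other) or disjoint.
   Context: A rooted plane tree $\mathsf{T}$ is a finite tree with a distinguished root, regarded as a poset $\leq_\mathsf{T}$ in which $v'\leq_\mathsf{T} v$ iff $v$ lies on the path from $v'$ to the root. An ornament is a nonempty set of nodes inducing a connected subgraph; an ornamentation is a map $\delta$ from nodes to ornaments such that the unique maximal element of $\delta(v)$ is $v$ and any two sets $\delta(v),\delta(v')$ are nested or disjoint. $\mathcal{O}(\mathsf{T})$ is the set of ornamentations ordered by $\delta\leq\delta'$ iff $\delta(v)\subseteq\delta'(v)$ for all $v$; it is a lattice with meet given by pointwise intersection. $\mathsf{Pop}(\delta)=\bigwedge(\{\delta\}\cup\{\delta':\delta'\lessdot\delta\})$, where $\lessdot$ is the cover relation. *)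

theory Defs
  imports Main
begin

text \<open>The root is its own parent (par r = r); every node reaches the root by iterating par.
  (The planar structure plays no role for ornamentations and is omitted.)\<close>
definition rooted_tree :: "'a set \<Rightarrow> 'a \<Rightarrow> ('a \<Rightarrow> 'a) \<Rightarrow> bool" where
  "rooted_tree V r par \<longleftrightarrow> finite V \<and> r \<in> V \<and> par r = r \<and>
     (\<forall>v\<in>V. par v \<in> V) \<and> (\<forall>v\<in>V. \<exists>k. (par ^^ k) v = r)"

definition tree_le :: "'a set \<Rightarrow> ('a \<Rightarrow> 'a) \<Rightarrow> 'a \<Rightarrow> 'a \<Rightarrow> bool" where
  "tree_le V par x y \<longleftrightarrow> x \<in> V \<and> y \<in> V \<and> (\<exists>k. (par ^^ k) x = y)"

definition tree_adj :: "'a set \<Rightarrow> 'a \<Rightarrow> ('a \<Rightarrow> 'a) \<Rightarrow> 'a \<Rightarrow> 'a \<Rightarrow> bool" where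
  "tree_adj V r par x y \<longleftrightarrow> x \<in> V \<and> y \<in> V \<and>
     ((x \<noteq> r \<and> par x = y) \<or> (y \<noteq> r \<and> par y = x))"

definition induces_connected :: "'a set \<Rightarrow> 'a \<Rightarrow> ('a \<Rightarrow> 'a) \<Rightarrow> 'a set \<Rightarrow> bool" where
  "induces_connected V r par S \<longleftrightarrow>
     (\<forall>x\<in>S. \<forall>y\<in>S. (x, y) \<in> {(a, b). a \<in> S \<and> b \<in> S \<and> tree_adj V r par a b}\<^sup>*)"

definition ornament :: "'a set \<Rightarrow> 'a \<Rightarrow> ('a \<Rightarrow> 'a) \<Rightarrow> 'a set \<Rightarrow> bool" where
  "ornament V r par S \<longleftrightarrow> S \<noteq> {} \<and> S \<subseteq> V \<and> induces_connected V r par S"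

definition nested_or_disjoint :: "'a set \<Rightarrow> 'a set \<Rightarrow> bool" where
  "nested_or_disjoint A B \<longleftrightarrow> A \<subseteq> B \<or> B \<subseteq> A \<or> A \<inter> B = {}"

definition ornamentations :: "'a set \<Rightarrow> 'a \<Rightarrow> ('a \<Rightarrow> 'a) \<Rightarrow> ('a \<Rightarrow> 'a set) set" where
  "ornamentations V r par = {\<delta>.
     (\<forall>v\<in>V. ornament V r par (\<delta> v)) \<and>
     (\<forall>v\<in>V. {w \<in> \<delta> v. \<forall>w'\<in>\<delta> v. tree_le V par w w' \<longrightarrow> w' = w} = {v}) \<and>
     (\<forall>v\<in>V. \<forall>v'\<in>V. nested_or_disjoint (\<delta> v) (\<delta> v')) \<and>
     (\<forall>v. v \<notin> V \<longrightarrow> \<delta> v = {})}"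

definition orn_le :: "'a set \<Rightarrow> ('a \<Rightarrow> 'a set) \<Rightarrow> ('a \<Rightarrow> 'a set) \<Rightarrow> bool" where
  "orn_le V \<delta> \<delta>' \<longleftrightarrow> (\<forall>v\<in>V. \<delta> v \<subseteq> \<delta>' v)"

definition orn_covered :: "'a set \<Rightarrow> 'a \<Rightarrow> ('a \<Rightarrow> 'a) \<Rightarrow> ('a \<Rightarrow> 'a set) \<Rightarrow> ('a \<Rightarrow> 'a set) \<Rightarrow> bool" where
  "orn_covered V r par \<delta>' \<delta> \<longleftrightarrow>
     \<delta>' \<in> ornamentations V r par \<and> \<delta> \<in> ornamentations V r par \<and>
     orn_le V \<delta>' \<delta> \<and> \<delta>' \<noteq> \<delta> \<and>
     \<not> (\<exists>\<gamma>\<in>ornamentations V r par. orn_le V \<delta>' \<gamma> \<and> orn_le V \<gamma> \<delta> \<and> \<gamma> \<noteq> \<delta>' \<and> \<gamma> \<noteq> \<delta>)"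

text \<open>Pop: meet (= pointwise intersection) of \<delta> and all elements it covers.\<close>
definition Pop :: "'a set \<Rightarrow> 'a \<Rightarrow> ('a \<Rightarrow> 'a) \<Rightarrow> ('a \<Rightarrow> 'a set) \<Rightarrow> ('a \<Rightarrow> 'a set)" where
  "Pop V r par \<delta> = (\<lambda>v. \<delta> v \<inter> (\<Inter>{\<delta>' v | \<delta>'. orn_covered V r par \<delta>' \<delta>}))"

end

theory Submission
  imports Defs
begin

abbreviation maxset :: "'a set \<Rightarrow> ('a \<Rightarrow> 'a) \<Rightarrow> 'a set \<Rightarrow> 'a set" where
  "maxset V par S \<equiv> {w \<in> S. \<forall>w'\<in>S. tree_le V par w w' \<longrightarrow> w' = w}"

lemma funpow_root: "par r = r \<Longrightarrow> (par ^^ n) r = r"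
  by (induction n) auto

lemma funpow_in: "\<forall>v\<in>V. par v \<in> V \<Longrightarrow> x \<in> V \<Longrightarrow> (par ^^ n) x \<in> V"
  by (induction n) auto

lemma tl_refl: "x \<in> V \<Longrightarrow> tree_le V par x x"
  unfolding tree_le_def by (metis funpow_0)

lemma tl_trans: "tree_le V par x y \<Longrightarrow> tree_le V par y z \<Longrightarrow> tree_le V par x z"
  unfolding tree_le_def by (metis comp_apply funpow_add)

lemma tl_par: "x \<in> V \<Longrightarrow> par x \<in> V \<Longrightarrow> tree_le V par x (par x)"
  unfolding tree_le_def by (rule conjI, simp, rule conjI, simp, rule exI[of _ 1], simp)

lemma funpow_mult_fix: "(f ^^ m) x = x \<Longrightarrow> (f ^^ (n * m)) x = x"
proof (induction n)
  case (Suc n)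
  then show ?case by (metis comp_apply funpow_add mult_Suc)
qed simp

lemma tl_antisym:
  assumes rt: "rooted_tree V r par" and "tree_le V par x y" "tree_le V par y x"
  shows "x = y"
proof -
  obtain k m where k: "(par ^^ k) x = y" and m: "(par ^^ m) y = x" and xV: "x \<in> V"
    using assms unfolding tree_le_def by auto
  obtain d where d: "(par ^^ d) x = r" using rt xV unfolding rooted_tree_def by auto
  have pr: "par r = r" using rt unfolding rooted_tree_def by auto
  show ?thesis
  proof (cases "k = 0")
    case True then show ?thesis using k by simp
  next
    case False
    have cyc: "(par ^^ (m + k)) x = x" using k m by (simp add: funpow_add)
    have "(par ^^ (d * (m + k))) x = x" using funpow_mult_fix[OF cyc] by (simp add: mult.commute)
    moreover have "d * (m + k) \<ge> d" using False by simp
    then have "(par ^^ (d * (m + k))) x = (par ^^ (d * (m + k) - d)) ((par ^^ d) x)"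
      by (metis comp_apply funpow_add le_add_diff_inverse2)
    ultimately have "x = r" using d funpow_root[of par r, OF pr] by metis
    then show ?thesis using k funpow_root[of par r, OF pr] by simp
  qed
qed

definition depth :: "'a \<Rightarrow> ('a \<Rightarrow> 'a) \<Rightarrow> 'a \<Rightarrow> nat" where
  "depth r par x = (LEAST k. (par ^^ k) x = r)"

lemma depth_lt:
  assumes rt: "rooted_tree V r par" and le: "tree_le V par x y" and ne: "x \<noteq> y"
  shows "depth r par y < depth r par x"
proof -
  obtain k where k: "(par ^^ k) x = y" and xV: "x \<in> V" using le unfolding tree_le_def by auto
  have pr: "par r = r" using rt unfolding rooted_tree_def by auto
  have k0: "k > 0" using k ne by (cases k) auto
  have ex: "\<exists>d. (par ^^ d) x = r" using rt xV unfolding rooted_tree_def by auto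
  define d where "d = depth r par x"
  have dx: "(par ^^ d) x = r" unfolding d_def depth_def using ex by (rule LeastI_ex)
  show ?thesis
  proof (cases "k \<le> d")
    case True
    have "(par ^^ (d - k)) y = r" using k dx True
      by (metis comp_apply funpow_add le_add_diff_inverse2)
    then have "depth r par y \<le> d - k" unfolding depth_def by (rule Least_le)
    then show ?thesis using True k0 d_def by linarith
  next
    case False
    have "y = (par ^^ (k - d)) ((par ^^ d) x)" using k False
      by (metis comp_apply funpow_add le_add_diff_inverse2 nat_le_linear)
    then have "y = r" using dx funpow_root[of par r, OF pr] by simp
    then have "depth r par y = 0" unfolding depth_def using pr
      by (metis (mono_tags, lifting) Least_eq_0 funpow_0)
    moreover have "d \<noteq> 0" using dx k ne funpow_root[of par r, OF pr] by (metis funpow_0)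
    ultimately show ?thesis using d_def by simp
  qed
qed

lemma max_lemma:
  assumes rt: "rooted_tree V r par" and TV: "T \<subseteq> V" and ms: "maxset V par T = {w}" and xT: "x \<in> T"
  shows "tree_le V par x w"
proof -
  let ?P = "\<lambda>z. z \<in> T \<and> tree_le V par x z"
  have Px: "?P x" using xT TV tl_refl[of x V par] by auto
  obtain z where z: "?P z" and zmin0: "\<forall>z'. ?P z' \<longrightarrow> depth r par z \<le> depth r par z'"
    using ex_has_least_nat[of ?P x "depth r par", OF Px] by blast
  have zmin: "depth r par z \<le> depth r par z'" if "?P z'" for z' using zmin0 that by simp
  have zmax: "\<forall>z'\<in>T. tree_le V par z z' \<longrightarrow> z' = z"
  proof (intro ballI impI)
    fix z' assume that: "z' \<in> T" "tree_le V par z z'"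
    show "z' = z"
    proof (rule ccontr)
      assume "z' \<noteq> z"
      then have lt: "depth r par z' < depth r par z" using depth_lt[OF rt that(2)] by auto
      have "tree_le V par x z'" using z that(2) by (rule tl_trans[OF conjunct2])
      then have "?P z'" using that(1) by simp
      then have "depth r par z \<le> depth r par z'" by (rule zmin)
      then show False using lt by linarith
    qed
  qed
  have "z \<in> maxset V par T" using z zmax by simp
  then have "z \<in> {w}" unfolding ms .
  then show ?thesis using z by simp
qed

lemma sub_max:
  assumes rt: "rooted_tree V r par" and TV: "T \<subseteq> V" and ms: "maxset V par T = {w}"
    and wS: "w \<in> S" and ST: "S \<subseteq> T"
  shows "maxset V par S = {w}"
proof -
  have "w \<in> {w}" by simp
  then have "w \<in> maxset V par T" unfolding ms .
  then have "\<forall>w'\<in>T. tree_le V par w w' \<longrightarrow> w' = w" by simp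
  then have w1: "w \<in> maxset V par S" using wS ST by auto
  have w2: "w' = w" if "w' \<in> maxset V par S" for w'
  proof -
    have "w' \<in> T" using that ST by auto
    then have twl: "tree_le V par w' w" by (rule max_lemma[OF rt TV ms])
    have "\<forall>w''\<in>S. tree_le V par w' w'' \<longrightarrow> w'' = w'" using that by simp
    then have "w = w'" using wS twl by simp
    then show ?thesis by simp
  qed
  show ?thesis
  proof (rule equalityI)
    show "maxset V par S \<subseteq> {w}"
    proof
      fix y assume "y \<in> maxset V par S"
      then have "y = w" by (rule w2)
      then show "y \<in> {w}" by simp
    qed
    show "{w} \<subseteq> maxset V par S" using w1 by (simp only: insert_subset empty_subsetI simp_thms)
  qed
qed

lemma ms_in:
  assumes "maxset V par S = {w}" shows "w \<in> S"
proof -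
  have "w \<in> {w}" by simp
  then have "w \<in> maxset V par S" unfolding assms .
  then show ?thesis by simp
qed

lemma up_closed:
  assumes rt: "rooted_tree V r par" and SV: "S \<subseteq> V" and conn: "induces_connected V r par S"
    and ms: "maxset V par S = {w}" and xS: "x \<in> S" and ne: "x \<noteq> w"
  shows "par x \<in> S"
proof (rule ccontr)
  assume nS: "par x \<notin> S"
  let ?R = "{(a, b). a \<in> S \<and> b \<in> S \<and> tree_adj V r par a b}"
  have "tree_le V par y x" if "(x, y) \<in> ?R\<^sup>*" for y
    using that
  proof (induction rule: rtrancl_induct)
    case base have "x \<in> V" using xS SV by auto
    then show ?case by (rule tl_refl)
  next
    case (step y z)
    then have yz: "y \<in> S" "z \<in> S" "tree_adj V r par y z" by auto
    show ?case
    proof (cases "y \<noteq> r \<and> par y = z")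
      case True
      obtain k where k: "(par ^^ k) y = x" using step.IH unfolding tree_le_def by auto
      show ?thesis
      proof (cases k)
        case 0 then show ?thesis using k True yz nS by simp
      next
        case (Suc k')
        then have "(par ^^ k') (par y) = x" using k by (simp only: funpow_Suc_right comp_apply)
        then have "(par ^^ k') z = x" using True by simp
        moreover have "z \<in> V" "x \<in> V" using yz xS SV by auto
        ultimately show ?thesis unfolding tree_le_def by auto
      qed
    next
      case False
      then have "par z = y" using yz(3) unfolding tree_adj_def by auto
      moreover have "z \<in> V" "y \<in> V" using yz SV by auto
      ultimately have "tree_le V par z y" using tl_par[of z V par] by simp
      then show ?thesis using step.IH by (rule tl_trans)
    qed
  qed
  moreover have "(x, w) \<in> ?R\<^sup>*" using conn xS ms_in[OF ms] unfolding induces_connected_def by simp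
  ultimately have "tree_le V par w x" by simp
  moreover have "tree_le V par x w" using max_lemma[OF rt SV ms xS] .
  ultimately have "x = w" by (rule tl_antisym[OF rt, rotated])
  then show False using ne by simp
qed

lemma chain_in:
  assumes rt: "rooted_tree V r par" and SV: "S \<subseteq> V" and conn: "induces_connected V r par S"
    and ms: "maxset V par S = {w}" and aS: "a \<in> S" and cw: "tree_le V par ((par ^^ j) a) w"
  shows "(par ^^ j) a \<in> S"
proof -
  have parV: "\<forall>v\<in>V. par v \<in> V" using rt unfolding rooted_tree_def by auto
  have aV: "a \<in> V" using aS SV by auto
  have "\<forall>i. i \<le> j \<longrightarrow> (par ^^ i) a \<in> S"
  proof
    fix i show "i \<le> j \<longrightarrow> (par ^^ i) a \<in> S"
    proof (induction i)
      case 0 then show ?case using aS by simp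
    next
      case (Suc i)
      show ?case
      proof
        assume ij: "Suc i \<le> j"
        then have pS: "(par ^^ i) a \<in> S" using Suc by simp
        show "(par ^^ Suc i) a \<in> S"
        proof (cases "(par ^^ i) a = w")
          case False
          then show ?thesis using up_closed[OF rt SV conn ms pS] by simp
        next
          case True
          let ?q = "(par ^^ Suc i) a"
          have qV: "?q \<in> V" using funpow_in[OF parV aV] .
          have jj: "j = (j - Suc i) + Suc i" using ij by simp
          have "(par ^^ j) a = (par ^^ (j - Suc i)) ?q"
            by (subst jj, simp only: funpow_add comp_apply)
          moreover have "(par ^^ j) a \<in> V" using funpow_in[OF parV aV] .
          ultimately have "tree_le V par ?q ((par ^^ j) a)" using qV
            unfolding tree_le_def by auto
          then have t1: "tree_le V par ?q w" using cw by (rule tl_trans)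
          have wV: "w \<in> V" "par w \<in> V" using ms_in[OF ms] SV parV by auto
          have "?q = par w" using True by simp
          then have t2: "tree_le V par w ?q" using tl_par[of w V par, OF wV] by simp
          have "?q = w" using tl_antisym[OF rt t1 t2] .
          then show ?thesis using ms_in[OF ms] by simp
        qed
      qed
    qed
  qed
  then show ?thesis by simp
qed

lemma conn_union:
  assumes "induces_connected V r par S1" "induces_connected V r par S2" "S1 \<inter> S2 \<noteq> {}"
  shows "induces_connected V r par (S1 \<union> S2)"
proof -
  let ?R = "\<lambda>S. {(a, b). a \<in> S \<and> b \<in> S \<and> tree_adj V r par a b}"
  have m1: "(?R S1)\<^sup>* \<subseteq> (?R (S1 \<union> S2))\<^sup>*" by (rule rtrancl_mono) auto
  have m2: "(?R S2)\<^sup>* \<subseteq> (?R (S1 \<union> S2))\<^sup>*" by (rule rtrancl_mono) auto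
  obtain p where p: "p \<in> S1" "p \<in> S2" using assms(3) by auto
  have h: "(x, p) \<in> (?R (S1 \<union> S2))\<^sup>* \<and> (p, x) \<in> (?R (S1 \<union> S2))\<^sup>*" if "x \<in> S1 \<union> S2" for x
  proof (cases "x \<in> S1")
    case True
    then have "(x, p) \<in> (?R S1)\<^sup>*" "(p, x) \<in> (?R S1)\<^sup>*"
      using assms(1) p unfolding induces_connected_def by auto
    then show ?thesis using m1 by auto
  next
    case False
    then have xS2: "x \<in> S2" using that by auto
    then have "(x, p) \<in> (?R S2)\<^sup>*" "(p, x) \<in> (?R S2)\<^sup>*"
      using assms(2) p unfolding induces_connected_def by auto
    then show ?thesis using m2 by auto
  qed
  show ?thesis unfolding induces_connected_def
  proof (intro ballI)
    fix x y assume "x \<in> S1 \<union> S2" "y \<in> S1 \<union> S2"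
    then have "(x, p) \<in> (?R (S1 \<union> S2))\<^sup>*" "(p, y) \<in> (?R (S1 \<union> S2))\<^sup>*"
      using h by auto
    then show "(x, y) \<in> (?R (S1 \<union> S2))\<^sup>*" by (rule rtrancl_trans)
  qed
qed

lemma orn_facts:
  assumes "\<delta> \<in> ornamentations V r par"
  shows "\<And>v. v \<in> V \<Longrightarrow> ornament V r par (\<delta> v)"
    and "\<And>v. v \<in> V \<Longrightarrow> maxset V par (\<delta> v) = {v}"
    and "\<And>v v'. v \<in> V \<Longrightarrow> v' \<in> V \<Longrightarrow> nested_or_disjoint (\<delta> v) (\<delta> v')"
    and "\<And>v. v \<notin> V \<Longrightarrow> \<delta> v = {}"
  using assms unfolding ornamentations_def by auto

lemma orn_sub: "ornament V r par S \<Longrightarrow> S \<subseteq> V"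
  unfolding ornament_def by simp

lemma cover_claim:
  assumes rt: "rooted_tree V r par" and dO: "\<delta> \<in> ornamentations V r par"
    and d'O: "\<delta>' \<in> ornamentations V r par" and le: "orn_le V \<delta>' \<delta>"
    and cov: "\<not> (\<exists>\<gamma>\<in>ornamentations V r par. orn_le V \<delta>' \<gamma> \<and> orn_le V \<gamma> \<delta> \<and> \<gamma> \<noteq> \<delta>' \<and> \<gamma> \<noteq> \<delta>)"
    and uV: "u \<in> V" and vV: "v \<in> V" and uv: "\<delta> u \<subseteq> \<delta> v" and une: "u \<noteq> v"
  shows "\<delta> u \<inter> \<delta>' v = {} \<or> \<delta> u \<subseteq> \<delta>' v"
proof (rule ccontr)
  assume H: "\<not> (\<delta> u \<inter> \<delta>' v = {} \<or> \<delta> u \<subseteq> \<delta>' v)"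
  define A where "A = \<delta> u"
  obtain x where x: "x \<in> A" "x \<in> \<delta>' v" using H A_def by auto
  obtain y where y: "y \<in> A" "y \<notin> \<delta>' v" using H A_def by auto
  note D = orn_facts[OF dO]
  note D' = orn_facts[OF d'O]
  have subV: "\<delta> w \<subseteq> V" if "w \<in> V" for w using orn_sub[OF D(1)[OF that]] .
  have subV': "\<delta>' w \<subseteq> V" if "w \<in> V" for w using orn_sub[OF D'(1)[OF that]] .
  have leW: "\<delta>' w \<subseteq> \<delta> w" if "w \<in> V" for w using le that unfolding orn_le_def by auto
  have inself: "w \<in> \<delta> w" if "w \<in> V" for w using ms_in[OF D(2)[OF that]] .
  have inself': "w \<in> \<delta>' w" if "w \<in> V" for w using ms_in[OF D'(2)[OF that]] .
  have AV: "A \<subseteq> V" using subV[OF uV] A_def by simp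
  have below: "tree_le V par a w" if "w \<in> V" "a \<in> \<delta> w" for a w
    using max_lemma[OF rt subV[OF that(1)] D(2)[OF that(1)] that(2)] .
  have below': "tree_le V par a w" if "w \<in> V" "a \<in> \<delta>' w" for a w
    using max_lemma[OF rt subV'[OF that(1)] D'(2)[OF that(1)] that(2)] .
  have F3: "\<delta> w \<subseteq> A" if "w \<in> A" for w
  proof -
    have wV: "w \<in> V" using that AV by auto
    have "nested_or_disjoint (\<delta> w) A" using D(3)[OF wV uV] A_def by simp
    moreover have "w \<in> \<delta> w \<inter> A" using inself[OF wV] that by simp
    moreover have "\<delta> w \<subseteq> A" if "A \<subseteq> \<delta> w"
    proof -
      have "u \<in> \<delta> w" using that inself[OF uV] A_def by auto
      then have "tree_le V par u w" using below[OF wV] by simp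
      moreover have "tree_le V par w u" using below[OF uV] \<open>w \<in> A\<close> A_def by simp
      ultimately have "u = w" by (rule tl_antisym[OF rt])
      then show ?thesis using A_def by simp
    qed
    ultimately show ?thesis unfolding nested_or_disjoint_def by blast
  qed
  have vA: "v \<notin> A"
  proof
    assume "v \<in> A"
    then have "tree_le V par v u" using below[OF uV] A_def by simp
    moreover have "tree_le V par u v" using below[OF vV] uv inself[OF uV] by auto
    ultimately show False using tl_antisym[OF rt] une by blast
  qed
  have F4a: "A \<subseteq> \<delta> w" if "w \<in> V" "w \<notin> A" "\<delta>' w \<inter> A \<noteq> {}" for w
  proof -
    have "nested_or_disjoint (\<delta> w) A" using D(3)[OF that(1) uV] A_def by simp
    moreover have "\<delta> w \<inter> A \<noteq> {}" using that(3) leW[OF that(1)] by auto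
    moreover have "\<not> \<delta> w \<subseteq> A" using inself[OF that(1)] that(2) by auto
    ultimately show ?thesis unfolding nested_or_disjoint_def by blast
  qed
  have F4b: "u \<in> \<delta>' w" if hw: "w \<in> V" "w \<notin> A" "\<delta>' w \<inter> A \<noteq> {}" for w
  proof -
    obtain a where a: "a \<in> \<delta>' w" "a \<in> A" using hw(3) by auto
    have "tree_le V par a u" using below[OF uV] a(2) A_def by simp
    then obtain j where j: "(par ^^ j) a = u" unfolding tree_le_def by auto
    have "u \<in> \<delta> w" using F4a[OF hw] inself[OF uV] A_def by auto
    then have "tree_le V par u w" using below[OF hw(1)] by simp
    then have "tree_le V par ((par ^^ j) a) w" using j by simp
    from chain_in[OF rt subV'[OF hw(1)] _ D'(2)[OF hw(1)] a(1) this]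
    show ?thesis using j D'(1)[OF hw(1)] unfolding ornament_def by simp
  qed
  define E where "E w \<longleftrightarrow> w \<notin> A \<and> \<delta>' w \<inter> A \<noteq> {}" for w
  define \<gamma> where "\<gamma> w = (if E w then \<delta>' w \<union> A else \<delta>' w)" for w
  have EV: "w \<in> V" if "E w" for w
  proof (rule ccontr)
    assume "w \<notin> V" then have "\<delta>' w = {}" by (rule D'(4))
    then show False using that E_def by simp
  qed
  have gO: "\<gamma> \<in> ornamentations V r par"
    unfolding ornamentations_def
  proof (intro CollectI conjI ballI allI impI)
    fix w assume wV: "w \<in> V"
    show "ornament V r par (\<gamma> w)"
    proof (cases "E w")
      case False then show ?thesis using D'(1)[OF wV] \<gamma>_def by simp
    next
      case True
      have o1: "ornament V r par (\<delta>' w)" using D'(1)[OF wV] .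
      have o2: "ornament V r par A" using D(1)[OF uV] A_def by simp
      have "induces_connected V r par (\<delta>' w \<union> A)"
        using conn_union[of V r par "\<delta>' w" A] o1 o2 True E_def unfolding ornament_def by simp
      then show ?thesis using o1 o2 True \<gamma>_def unfolding ornament_def by simp
    qed
  next
    fix w assume wV: "w \<in> V"
    show "maxset V par (\<gamma> w) = {w}"
    proof (rule sub_max[OF rt subV[OF wV] D(2)[OF wV]])
      show "w \<in> \<gamma> w" using inself'[OF wV] \<gamma>_def by simp
      show "\<gamma> w \<subseteq> \<delta> w"
      proof (cases "E w")
        case False then show ?thesis using leW[OF wV] \<gamma>_def by simp
      next
        case True then show ?thesis using leW[OF wV] F4a[OF wV] \<gamma>_def E_def by simp
      qed
    qed
  next
    fix w1 w2 assume w1: "w1 \<in> V" and w2: "w2 \<in> V"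
    have nd: "nested_or_disjoint (\<delta>' w1) (\<delta>' w2)" using D'(3)[OF w1 w2] .
    have case_mixed: "nested_or_disjoint (\<delta>' a \<union> A) (\<delta>' b)"
      if a: "a \<in> V" "E a" and b: "b \<in> V" "\<not> E b" and ndab: "nested_or_disjoint (\<delta>' a) (\<delta>' b)" for a b
    proof (cases "b \<in> A")
      case True
      then have "\<delta>' b \<subseteq> A" using leW[OF b(1)] F3[OF True] by auto
      then show ?thesis unfolding nested_or_disjoint_def by auto
    next
      case False
      then have dis: "\<delta>' b \<inter> A = {}" using b(2) E_def by simp
      have "\<delta>' a \<inter> A \<noteq> {}" using a(2) E_def by simp
      then have "\<not> \<delta>' a \<subseteq> \<delta>' b" using dis by auto
      then show ?thesis using ndab dis unfolding nested_or_disjoint_def by auto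
    qed
    have sym: "nested_or_disjoint X Y \<Longrightarrow> nested_or_disjoint Y X" for X Y
      unfolding nested_or_disjoint_def by auto
    show "nested_or_disjoint (\<gamma> w1) (\<gamma> w2)"
    proof (cases "E w1")
      case E1: True
      show ?thesis
      proof (cases "E w2")
        case E2: True
        have "u \<in> \<delta>' w1" "u \<in> \<delta>' w2" using F4b w1 w2 E1 E2 E_def by auto
        then have "\<delta>' w1 \<subseteq> \<delta>' w2 \<or> \<delta>' w2 \<subseteq> \<delta>' w1" using nd unfolding nested_or_disjoint_def by auto
        then show ?thesis using E1 E2 \<gamma>_def unfolding nested_or_disjoint_def by auto
      next
        case E2: False
        show ?thesis using case_mixed[OF w1 E1 w2 E2 nd] E1 E2 \<gamma>_def by simp
      qed
    next
      case E1: False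
      show ?thesis
      proof (cases "E w2")
        case E2: True
        show ?thesis using sym[OF case_mixed[OF w2 E2 w1 E1 sym[OF nd]]] E1 E2 \<gamma>_def by simp
      next
        case E2: False
        show ?thesis using nd E1 E2 \<gamma>_def by simp
      qed
    qed
  next
    fix w assume "w \<notin> V"
    then have "\<not> E w" using EV by blast
    then show "\<gamma> w = {}" using D'(4)[OF \<open>w \<notin> V\<close>] \<gamma>_def by simp
  qed
  have g1: "orn_le V \<delta>' \<gamma>" unfolding orn_le_def \<gamma>_def by auto
  have g2: "orn_le V \<gamma> \<delta>" unfolding orn_le_def
  proof
    fix w assume wV: "w \<in> V"
    show "\<gamma> w \<subseteq> \<delta> w"
    proof (cases "E w")
      case False then show ?thesis using leW[OF wV] \<gamma>_def by simp
    next
      case True then show ?thesis using leW[OF wV] F4a[OF wV] \<gamma>_def E_def by simp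
    qed
  qed
  have Ev: "E v" using vA x E_def by auto
  have g3: "\<gamma> \<noteq> \<delta>'"
  proof
    assume "\<gamma> = \<delta>'"
    then have "\<gamma> v = \<delta>' v" by simp
    moreover have "y \<in> \<gamma> v" using Ev y(1) \<gamma>_def by simp
    ultimately show False using y(2) by simp
  qed
  have "\<gamma> = \<delta>" using cov gO g1 g2 g3 by blast
  moreover have "\<not> E u" using inself[OF uV] A_def E_def by simp
  ultimately have d'u: "\<delta>' u = A" using \<gamma>_def A_def by (metis)
  have uin: "u \<in> \<delta>' v" using F4b[OF vV vA] x by auto
  have "nested_or_disjoint (\<delta>' u) (\<delta>' v)" using D'(3)[OF uV vV] .
  moreover have "u \<in> \<delta>' u" using inself'[OF uV] .
  moreover have "\<not> \<delta>' v \<subseteq> \<delta>' u" using inself'[OF vV] vA d'u by auto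
  moreover have "\<not> \<delta>' u \<subseteq> \<delta>' v" using y d'u by auto
  ultimately show False using uin unfolding nested_or_disjoint_def by auto
qed

lemma Pop_sub: "Pop V r par \<delta> v \<subseteq> \<delta> v"
  unfolding Pop_def by auto

lemma main_V:
  assumes rt: "rooted_tree V r par" and dO: "\<delta> \<in> ornamentations V r par"
    and uV: "u \<in> V" and vV: "v \<in> V"
  shows "nested_or_disjoint (\<delta> u) (Pop V r par \<delta> v)"
proof -
  note D = orn_facts[OF dO]
  have P: "Pop V r par \<delta> v = \<delta> v \<inter> (\<Inter>{\<delta>' v | \<delta>'. orn_covered V r par \<delta>' \<delta>})"
    unfolding Pop_def by simp
  have nd: "nested_or_disjoint (\<delta> u) (\<delta> v)" using D(3)[OF uV vV] .
  show ?thesis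
  proof (cases "\<delta> u \<subseteq> \<delta> v \<and> u \<noteq> v")
    case False
    then have "\<delta> v \<subseteq> \<delta> u \<or> \<delta> u \<inter> \<delta> v = {}" using nd unfolding nested_or_disjoint_def by auto
    then show ?thesis using Pop_sub[of V r par \<delta> v] unfolding nested_or_disjoint_def by auto
  next
    case True
    show ?thesis
    proof (cases "\<exists>\<delta>'. orn_covered V r par \<delta>' \<delta> \<and> \<delta> u \<inter> \<delta>' v = {}")
      case True
      then obtain \<delta>' where "orn_covered V r par \<delta>' \<delta>" "\<delta> u \<inter> \<delta>' v = {}" by blast
      then have "\<delta> u \<inter> Pop V r par \<delta> v = {}" unfolding P by blast
      then show ?thesis unfolding nested_or_disjoint_def by simp
    next
      case False
      have "\<delta> u \<subseteq> \<delta>' v" if c: "orn_covered V r par \<delta>' \<delta>" for \<delta>'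
      proof -
        have "\<delta>' \<in> ornamentations V r par" "orn_le V \<delta>' \<delta>"
          "\<not> (\<exists>\<gamma>\<in>ornamentations V r par. orn_le V \<delta>' \<gamma> \<and> orn_le V \<gamma> \<delta> \<and> \<gamma> \<noteq> \<delta>' \<and> \<gamma> \<noteq> \<delta>)"
          using c unfolding orn_covered_def by auto
        from cover_claim[OF rt dO this uV vV] True have "\<delta> u \<inter> \<delta>' v = {} \<or> \<delta> u \<subseteq> \<delta>' v" by auto
        then show ?thesis using False c by auto
      qed
      then have "\<delta> u \<subseteq> Pop V r par \<delta> v" unfolding P using True by blast
      then show ?thesis unfolding nested_or_disjoint_def by simp
    qed
  qed
qed

theorem lemma4p1:
  fixes V :: "'a set" and r :: 'a and par :: "'a \<Rightarrow> 'a"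
    and \<delta> :: "'a \<Rightarrow> 'a set" and \<omega> u v :: 'a
  assumes "rooted_tree V r par"
    and "\<delta> \<in> ornamentations V r par"
    and "\<omega> \<notin> V"
    and "u \<in> insert \<omega> V" and "v \<in> insert \<omega> V"
  shows "nested_or_disjoint ((\<delta>(\<omega> := insert \<omega> V)) u)
                            (((Pop V r par \<delta>)(\<omega> := insert \<omega> V)) v)"
proof -
  note D = orn_facts[OF assms(2)]
  have dV: "\<delta> w \<subseteq> V" if "w \<in> V" for w using orn_sub[OF D(1)[OF that]] .
  show ?thesis
  proof (cases "u = \<omega>")
    case True
    have "((Pop V r par \<delta>)(\<omega> := insert \<omega> V)) v \<subseteq> insert \<omega> V"
    proof (cases "v = \<omega>")
      case False
      then have "v \<in> V" using assms(5) by simp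
      then show ?thesis using False Pop_sub[of V r par \<delta> v] dV[of v] by auto
    qed simp
    then show ?thesis using True unfolding nested_or_disjoint_def by simp
  next
    case uF: False
    then have uV: "u \<in> V" using assms(4) by simp
    show ?thesis
    proof (cases "v = \<omega>")
      case True
      then show ?thesis using uF dV[OF uV] unfolding nested_or_disjoint_def by auto
    next
      case False
      then have "v \<in> V" using assms(5) by simp
      then show ?thesis using main_V[OF assms(1,2) uV] uF False by simp
    qed
  qed
qed

end
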